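(* Let $\alpha<1$ be a real number. Let $P_1$ be a set of primes with $P_1(X)\ge c\frac{\sqrt{X}}{(\log X)^{\alpha}}$ for all sufficiently large real $X$, where $c>0$ is a constant. Then for any integer $k\ge 2$, $$P_1^k(X)\ge c_1\sqrt{X}(\log X)^{k-1-k\alpha}$$ for all sufficiently large $X$, where $c_1>0$ is a constant depending only on $c$ and $k$.
   Context: $P_1^1=P_1$, $P_1^k=P_1P_1^{k-1}$ where $AB=\{ab:a\in A,b\in B\}$; for $S\subset\mathbb{N}_0$, $S(X)=|S\cap[1,X]|$. *)

theory Defs
  imports Complex_Main "HOL-Number_Theory.Number_Theory"
begin

definition setmul :: "nat set \<Rightarrow> nat set \<Rightarrow> nat set" where
  "setmul A B = {a * b | a b. a \<in> A \<and> b \<in> B}"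

text \<open>Iterated product set: setpow A 1 = A, setpow A k = A (setpow A (k-1)).
  (setpow A 0 = {1} is only a convenient base case.)\<close>
fun setpow :: "nat set \<Rightarrow> nat \<Rightarrow> nat set" where
  "setpow A 0 = {1}"
| "setpow A (Suc k) = setmul A (setpow A k)"

definition count_upto :: "nat set \<Rightarrow> real \<Rightarrow> nat" where
  "count_upto S X = card {n \<in> S. 1 \<le> n \<and> real n \<le> X}"

end

theory Submission
  imports Defs
begin

lemma card_fiber_bound:
  assumes "finite T" and "\<And>y. card {x\<in>T. f x = y} \<le> k"
  shows "card T \<le> k * card (f ` T)"
proof -
  have "T = (\<Union>y\<in>f ` T. {x\<in>T. f x = y})" by auto
  hence "card T = (\<Sum>y\<in>f ` T. card {x\<in>T. f x = y})"
    using assms(1) by (subst card_UN_disjoint[symmetric]) auto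
  also have "\<dots> \<le> (\<Sum>y\<in>f ` T. k)" by (rule sum_mono) (rule assms(2))
  finally show ?thesis by (simp add: mult.commute)
qed

lemma setpow_facts:
  assumes "\<forall>p\<in>P. prime p"
  shows "n \<in> setpow P m \<Longrightarrow> n > 0 \<and> card (prime_factors n) \<le> m"
proof (induction m arbitrary: n)
  case 0 then show ?case by simp
next
  case (Suc m)
  then obtain p q where pq: "n = p * q" "p \<in> P" "q \<in> setpow P m"
    by (auto simp: setmul_def)
  have p: "prime p" using assms pq by auto
  have q: "q > 0" "card (prime_factors q) \<le> m" using Suc.IH pq(3) by auto
  have "prime_factors n = {p} \<union> prime_factors q"
    using pq p q by (simp add: prime_factors_product prime_prime_factors prime_gt_0_nat)
  hence "card (prime_factors n) \<le> Suc (card (prime_factors q))"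
    by (simp add: card_insert_if)
  then show ?case using q p pq by (simp add: prime_gt_0_nat)
qed


lemma count_upto_0: "count_upto P 0 = 0"
  unfolding count_upto_def by (auto intro: card_eq_0_iff[THEN iffD2])

lemma finite_count_set: "finite {n \<in> S. 1 \<le> n \<and> real n \<le> X}"
proof -
  have "{n \<in> S. 1 \<le> n \<and> real n \<le> X} \<subseteq> {..nat \<lfloor>X\<rfloor>}"
    by (auto simp: le_nat_floor)
  thus ?thesis by (rule finite_subset) simp
qed

lemma finite_count_set': "finite {n \<in> S. Suc 0 \<le> n \<and> real n \<le> X}"
  using finite_count_set[of S X] by simp

lemma count_upto_Suc:
  "count_upto P (real (Suc n)) = count_upto P (real n) + (if Suc n \<in> P then 1 else 0)"
proof -
  let ?S = "{m \<in> P. 1 \<le> m \<and> real m \<le> real n}"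
  have fin: "finite ?S" by (rule finite_count_set)
  have "{m \<in> P. 1 \<le> m \<and> real m \<le> real (Suc n)} = (if Suc n \<in> P then insert (Suc n) ?S else ?S)"
    by (auto simp del: of_nat_Suc simp add: le_Suc_eq)
  moreover have "Suc n \<notin> ?S" by auto
  ultimately show ?thesis unfolding count_upto_def using fin by auto
qed

lemma abel_count:
  fixes f :: "nat \<Rightarrow> real"
  assumes f0: "f 0 = 0"
  shows "(\<Sum>m\<le>N. if m \<in> P then f m else 0) =
    real (count_upto P (real N)) * f N + (\<Sum>n<N. real (count_upto P (real n)) * (f n - f (Suc n)))"
proof (induction N)
  case 0
  show ?case by (subst atMost_0) (simp add: count_upto_0 f0)
next
  case (Suc N)
  have "(\<Sum>m\<le>Suc N. if m \<in> P then f m else 0) = (\<Sum>m\<le>N. if m \<in> P then f m else 0) + (if Suc N \<in> P then f (Suc N) else 0)"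
    by simp
  also have "\<dots> = real (count_upto P (real N)) * f N + (\<Sum>n<N. real (count_upto P (real n)) * (f n - f (Suc n))) + (if Suc N \<in> P then f (Suc N) else 0)"
    using Suc.IH by simp
  also have "\<dots> = real (count_upto P (real (Suc N))) * f (Suc N) + (\<Sum>n<Suc N. real (count_upto P (real n)) * (f n - f (Suc n)))"
    using count_upto_Suc[of P N] by (simp add: algebra_simps)
  finally show ?case .
qed

lemma sum_restrict_conv:
  fixes g :: "nat \<Rightarrow> real"
  assumes "g 0 = 0"
  shows "(\<Sum>m\<le>N. if m \<in> P then g m else 0) = (\<Sum>p\<in>P \<inter> {1..N}. g p)"
proof -
  have "(\<Sum>p\<in>P \<inter> {1..N}. g p) = (\<Sum>p\<in>{1..N}. if p \<in> P then g p else 0)"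
  proof -
    have "P \<inter> {1..N} = {p \<in> {1..N}. p \<in> P}" by auto
    hence "(\<Sum>p\<in>P \<inter> {1..N}. g p) = (\<Sum>p\<in>{p \<in> {1..N}. p \<in> P}. g p)" by simp
    also have "\<dots> = (\<Sum>p\<in>{1..N}. if p \<in> P then g p else 0)" by (rule sum.inter_filter) simp
    finally show ?thesis .
  qed
  also have "\<dots> = (\<Sum>m\<le>N. if m \<in> P then g m else 0)"
  proof -
    have "{..N} = insert 0 {1..N}" by auto
    thus ?thesis using assms by simp
  qed
  finally show ?thesis by simp
qed

lemma recip_sqrt_diff:
  assumes "n \<ge> 1"
  shows "1 / sqrt (real n) - 1 / sqrt (real (Suc n)) \<ge> 1 / (2 * real (Suc n) * sqrt (real n))"
proof -
  define a where "a = sqrt (real n)"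
  define b where "b = sqrt (real (Suc n))"
  have a: "a > 0" using assms by (simp add: a_def)
  have ab: "a < b" by (simp add: a_def b_def)
  have bb: "b * b = real (Suc n)" by (simp add: b_def)
  have aa: "a * a = real n" by (simp add: a_def)
  have "(b - a) * (b + a) = 1" using aa bb by (simp add: algebra_simps)
  hence ba: "b - a = 1 / (b + a)" using a ab by (simp add: field_simps)
  have "1 / (b + a) \<ge> 1 / (2 * b)" using a ab by (simp add: frac_le)
  hence "b - a \<ge> 1 / (2*b)" using ba by simp
  hence "(b - a) / (a * b) \<ge> (1 / (2 * b)) / (a * b)"
    by (rule divide_right_mono) (use a ab in auto)
  moreover have "1 / a - 1 / b = (b - a) / (a * b)" using a ab by (simp add: field_simps)
  moreover have "1 / (2 * real (Suc n) * a) = (1 / (2 * b)) / (a * b)"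
    unfolding bb[symmetric] using a ab by (simp add: field_simps)
  ultimately have "1 / a - 1 / b \<ge> 1 / (2 * real (Suc n) * a)" by linarith
  then show ?thesis by (simp add: a_def b_def)
qed

lemma harmonic_ln:
  assumes "M \<le> N"
  shows "(\<Sum>n\<in>{M..<N}. 1 / real (Suc n)) \<ge> ln (real N + 1) - ln (real M + 1)"
  using assms
proof (induction N rule: dec_induct)
  case base then show ?case by simp
next
  case (step N)
  have e: "1 + 1 / (real N + 1) = (real (Suc N) + 1) / (real N + 1)" by (simp add: field_simps)
  have "ln (real (Suc N) + 1) - ln (real N + 1) = ln (1 + 1 / (real N + 1))"
    unfolding e by (subst ln_div) auto
  also have "\<dots> \<le> 1 / (real N + 1)" by (rule ln_add_one_self_le_self) simp
  finally have fin: "ln (real (Suc N) + 1) - ln (real N + 1) \<le> 1 / (real N + 1)" .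
  have "(\<Sum>n\<in>{M..<Suc N}. 1/real (Suc n)) = (\<Sum>n\<in>{M..<N}. 1/real(Suc n)) + 1/(real N+1)"
    using step by (simp add: add.commute)
  then show ?case using step.IH fin by linarith
qed


lemma half_powr: "0 < v \<Longrightarrow> (v / 2) powr a = 2 powr (-a) * v powr a" for v a :: real
  by (simp add: powr_divide powr_minus_divide)

lemma powr_band_upper:
  fixes u v a :: real
  assumes "0 < v" "v / 2 \<le> u" "u \<le> v"
  shows "u powr a \<le> max 1 (2 powr (-a)) * v powr a"
proof (cases "a \<ge> 0")
  case True
  have "u powr a \<le> v powr a" by (rule powr_mono2) (use True assms in auto)
  also have "\<dots> \<le> max 1 (2 powr (-a)) * v powr a"
    using mult_right_mono[of 1 "max 1 (2 powr (-a))" "v powr a"] by simp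
  finally show ?thesis .
next
  case False
  have "u powr a \<le> (v/2) powr a" by (rule powr_mono2') (use False assms in auto)
  also have "\<dots> = 2 powr (-a) * v powr a" using assms by (simp add: half_powr)
  also have "\<dots> \<le> max 1 (2 powr (-a)) * v powr a" by (rule mult_right_mono) auto
  finally show ?thesis .
qed

lemma powr_band_lower:
  fixes u v a :: real
  assumes "0 < v" "v / 2 \<le> u" "u \<le> v"
  shows "u powr a \<ge> min 1 (2 powr (-a)) * v powr a"
proof (cases "a \<ge> 0")
  case True
  have "min 1 (2 powr (-a)) * v powr a \<le> 2 powr (-a) * v powr a" by (rule mult_right_mono) auto
  also have "\<dots> = (v/2) powr a" using assms by (simp add: half_powr)
  also have "\<dots> \<le> u powr a" by (rule powr_mono2) (use True assms in auto)
  finally show ?thesis .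
next
  case False
  have "min 1 (2 powr (-a)) * v powr a \<le> 1 * v powr a" by (rule mult_right_mono) auto
  also have "\<dots> \<le> u powr a" using powr_mono2'[of a u v] False assms by auto
  finally show ?thesis .
qed


lemma sqrt_nat_facts:
  fixes N :: nat
  assumes "N \<ge> 16"
  shows "sqrt (real N) \<ge> 4" "sqrt (real N) + 1 \<le> real N" "ln (real N) \<ge> 4 * ln 2"
proof -
  have "sqrt 16 \<le> sqrt (real N)" using assms by (subst real_sqrt_le_iff) simp
  moreover have "sqrt (16::real) = 4" by simp
  ultimately show s4: "sqrt (real N) \<ge> 4" by simp
  have "real N = sqrt (real N) * sqrt (real N)" by simp
  also have "\<dots> \<ge> 4 * sqrt (real N)" using s4 by (intro mult_right_mono) auto
  finally show "sqrt (real N) + 1 \<le> real N" using s4 by linarith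
  have "ln (real N) \<ge> ln (2^4)" using assms by (subst ln_le_cancel_iff) auto
  moreover have "ln ((2::real)^4) = 4 * ln 2" by (simp only: ln_realpow)
  ultimately show "ln (real N) \<ge> 4 * ln 2" by linarith
qed

lemma sum_recip_sqrt_lower:
  fixes \<alpha> c :: real
  assumes "\<alpha> < 1" "c > 0"
  shows "\<exists>d>0. \<forall>P::nat set. (\<forall>\<^sub>F X in at_top. real (count_upto P X) \<ge> c * sqrt X / (ln X) powr \<alpha>) \<longrightarrow>
     (\<exists>N0. \<forall>N\<ge>N0. (\<Sum>p\<in>P \<inter> {1..N}. 1 / sqrt (real p)) \<ge> d * (ln (real N)) powr (1 - \<alpha>))"
proof -
  define Ma where "Ma = max 1 (2 powr (-\<alpha>))"
  have Ma: "Ma \<ge> 1" by (simp add: Ma_def)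
  define d where "d = c / (8 * Ma)"
  have dpos: "d > 0" using Ma assms by (simp add: d_def)
  show ?thesis
  proof (intro exI[of _ d] conjI allI impI dpos)
    fix P :: "nat set"
    assume "\<forall>\<^sub>F X in at_top. real (count_upto P X) \<ge> c * sqrt X / (ln X) powr \<alpha>"
    then obtain X0 where X0: "\<And>X. X \<ge> X0 \<Longrightarrow> real (count_upto P X) \<ge> c * sqrt X / (ln X) powr \<alpha>"
      by (auto simp: eventually_at_top_linorder)
    define n0 where "n0 = max 3 (nat \<lceil>X0\<rceil>)"
    show "\<exists>N0. \<forall>N\<ge>N0. (\<Sum>p\<in>P \<inter> {1..N}. 1 / sqrt (real p)) \<ge> d * (ln (real N)) powr (1 - \<alpha>)"
    proof (intro exI[of _ "max 16 (n0*n0)"] allI impI)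
      fix N assume N: "max 16 (n0*n0) \<le> N"
      define A where "A = (\<lambda>n::nat. real (count_upto P (real n)))"
      define f where "f = (\<lambda>n::nat. 1 / sqrt (real n))"
      define M where "M = nat \<lceil>sqrt (real N)\<rceil>"
      have N16: "N \<ge> 16" and Nn0: "n0*n0 \<le> N" using N by auto
      note sf = sqrt_nat_facts[OF N16]
      have "real n0 = sqrt (real (n0*n0))" by simp
      also have "\<dots> \<le> sqrt (real N)" by (intro real_sqrt_le_mono) (use Nn0 in \<open>simp only: of_nat_mult[symmetric] of_nat_le_iff\<close>)
      finally have sqN: "real n0 \<le> sqrt (real N)" .
      have M_sq: "real M \<ge> sqrt (real N)" unfolding M_def by linarith
      have M_le: "real M \<le> sqrt (real N) + 1" unfolding M_def using sf(1) by linarith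
      have M_ge: "M \<ge> n0" using sqN M_sq by linarith
      have MN: "M \<le> N" using M_le sf(2) by linarith
      have ln2: "ln (2::real) > 0" by simp
      have lnN: "ln (real N) > 0" using sf(3) ln2 by linarith
      have S_eq: "(\<Sum>p\<in>P \<inter> {1..N}. 1 / sqrt (real p)) = A N * f N + (\<Sum>n<N. A n * (f n - f (Suc n)))"
        unfolding A_def f_def
        by (subst sum_restrict_conv[where g="\<lambda>p. 1 / sqrt (real p)" and N=N and P=P, symmetric], simp)
           (rule abel_count, simp)
      have Anonneg: "\<And>n. A n \<ge> 0" by (simp add: A_def)
      have nonneg: "0 \<le> A n * (f n - f (Suc n))" for n
      proof (cases "n = 0")
        case True then show ?thesis by (simp add: A_def count_upto_0)
      next
        case False
        have "f (Suc n) \<le> f n" unfolding f_def using False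
          by (intro divide_left_mono) (auto intro: mult_pos_pos)
        then show ?thesis using Anonneg[of n] by simp
      qed
      have fN: "A N * f N \<ge> 0" using Anonneg[of N] by (simp add: f_def)
      have sub: "(\<Sum>n\<in>{M..<N}. A n * (f n - f (Suc n))) \<le> (\<Sum>n<N. A n * (f n - f (Suc n)))"
        by (rule sum_mono2) (auto intro: nonneg)
      define K where "K = c / (2 * Ma) * (ln (real N)) powr (-\<alpha>)"
      have Kpos: "K \<ge> 0" using assms Ma by (simp add: K_def)
      have termb: "K * (1 / real (Suc n)) \<le> A n * (f n - f (Suc n))" if n: "n \<in> {M..<N}" for n
      proof -
        have n3: "n \<ge> 3" and nX0: "real n \<ge> X0" using n M_ge unfolding n0_def by auto
        have nsq: "real n \<ge> sqrt (real N)" and nN: "n \<le> N" using n M_sq by auto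
        have lnn: "ln (real n) > 0" using n3 by simp
        have lnn2: "ln (real N) / 2 \<le> ln (real n)"
        proof -
          have "ln (sqrt (real N)) \<le> ln (real n)" using nsq sf(1) N16 by (subst ln_le_cancel_iff) auto
          thus ?thesis by (simp add: ln_sqrt)
        qed
        have lnnN: "ln (real n) \<le> ln (real N)" using nN n3 by simp
        have A_lb: "A n \<ge> c * sqrt (real n) / (ln (real n)) powr \<alpha>" using X0[OF nX0] by (simp add: A_def)
        have f_lb: "f n - f (Suc n) \<ge> 1 / (2 * real (Suc n) * sqrt (real n))"
          using recip_sqrt_diff[of n] n3 by (simp add: f_def)
        have lnpow: "(ln (real n)) powr \<alpha> \<le> Ma * (ln (real N)) powr \<alpha>"
          unfolding Ma_def by (rule powr_band_upper) (use lnN lnn2 lnnN in auto)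
        have sqn: "sqrt (real n) > 0" using n3 by simp
        have "c * sqrt (real n) / (ln (real n)) powr \<alpha> * (1 / (2 * real (Suc n) * sqrt (real n)))
               \<le> A n * (f n - f (Suc n))"
          by (rule mult_mono[OF A_lb f_lb]) (use Anonneg sqn in auto)
        moreover have "c * sqrt (real n) / (ln (real n)) powr \<alpha> * (1 / (2 * real (Suc n) * sqrt (real n)))
            = c / (2 * real (Suc n) * (ln (real n)) powr \<alpha>)"
        proof -
          have pw: "(ln (real n)) powr \<alpha> > 0" using lnn by simp
          have gen: "\<And>x y s. x > 0 \<Longrightarrow> y > 0 \<Longrightarrow> s > 0 \<Longrightarrow> c * x / y * (1 / (2 * s * x)) = c / (2 * s * y)"
            by (simp add: field_simps)
          show ?thesis by (rule gen) (use sqn pw in auto)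
        qed
        moreover have "c / (2 * real (Suc n) * (Ma * (ln (real N)) powr \<alpha>)) \<le> c / (2 * real (Suc n) * (ln (real n)) powr \<alpha>)"
        proof (rule divide_left_mono)
          have pw: "(ln (real n)) powr \<alpha> > 0" "(ln (real N)) powr \<alpha> > 0" using lnn lnN by auto
          show "0 < 2 * real (Suc n) * (Ma * ln (real N) powr \<alpha>) * (2 * real (Suc n) * ln (real n) powr \<alpha>)"
            using pw Ma by (intro mult_pos_pos) auto
        qed (use assms lnpow in auto)
        moreover have "c / (2 * real (Suc n) * (Ma * (ln (real N)) powr \<alpha>)) = K * (1 / real (Suc n))"
          unfolding K_def using Ma lnN by (simp add: powr_minus field_simps)
        ultimately show ?thesis by linarith
      qed
      have sumK: "K * (\<Sum>n\<in>{M..<N}. 1 / real (Suc n)) \<le> (\<Sum>n\<in>{M..<N}. A n * (f n - f (Suc n)))"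
        unfolding sum_distrib_left by (rule sum_mono) (rule termb)
      have H: "(\<Sum>n\<in>{M..<N}. 1 / real (Suc n)) \<ge> ln (real N) / 4"
      proof -
        have h1: "(\<Sum>n\<in>{M..<N}. 1 / real (Suc n)) \<ge> ln (real N + 1) - ln (real M + 1)"
          by (rule harmonic_ln[OF MN])
        have h2: "ln (real N + 1) \<ge> ln (real N)" using N16 by simp
        have "real M + 1 \<le> 2 * sqrt (real N)" using M_le sf(1) by linarith
        hence "ln (real M + 1) \<le> ln (2 * sqrt (real N))" using N16 by (subst ln_le_cancel_iff) auto
        also have "\<dots> = ln 2 + ln (real N) / 2" using sf(1) N16 by (simp add: ln_mult ln_sqrt)
        finally have h3: "ln (real M + 1) \<le> ln 2 + ln (real N) / 2" .
        show ?thesis using h1 h2 h3 sf(3) by linarith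
      qed
      have "d * (ln (real N)) powr (1 - \<alpha>) = K * (ln (real N) / 4)"
      proof -
        have "(ln (real N)) powr (1 - \<alpha>) = ln (real N) * (ln (real N)) powr (-\<alpha>)"
          using lnN powr_add[of "ln (real N)" 1 "-\<alpha>"] by simp
        thus ?thesis unfolding d_def K_def using Ma by (simp add: field_simps)
      qed
      also have "\<dots> \<le> K * (\<Sum>n\<in>{M..<N}. 1 / real (Suc n))" by (rule mult_left_mono[OF H Kpos])
      also have "\<dots> \<le> (\<Sum>p\<in>P \<inter> {1..N}. 1 / sqrt (real p))" using sumK sub S_eq fN by linarith
      finally show "(\<Sum>p\<in>P \<inter> {1..N}. 1 / sqrt (real p)) \<ge> d * (ln (real N)) powr (1 - \<alpha>)" .
    qed
  qed
qed


lemma sqrt_ge_of_sq: "X \<ge> a\<^sup>2 \<Longrightarrow> sqrt X \<ge> a" for X a :: real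
proof -
  assume "X \<ge> a\<^sup>2"
  hence "sqrt (a\<^sup>2) \<le> sqrt X" by (rule real_sqrt_le_mono)
  thus ?thesis by simp
qed

lemma setmul_one: "setmul P {Suc 0} = P"
  by (auto simp: setmul_def)

lemma setpow_one: "setpow P (Suc 0) = P"
  by (auto simp: setmul_def)

lemma step_bound:
  fixes \<alpha> C d X :: real and j N0 :: nat and Z0 :: real and P1 :: "nat set"
  assumes "\<alpha> < 1" "C > 0" "d > 0" "j \<ge> 1"
    and primes: "\<forall>p\<in>P1. prime p"
    and hQ: "\<And>Z. Z \<ge> Z0 \<Longrightarrow> real (count_upto (setpow P1 j) Z) \<ge> C * sqrt Z * (ln Z) powr (real j - 1 - real j * \<alpha>)"
    and hS: "\<And>N. N \<ge> N0 \<Longrightarrow> (\<Sum>p\<in>P1 \<inter> {1..N}. 1 / sqrt (real p)) \<ge> d * (ln (real N)) powr (1 - \<alpha>)"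
    and X: "X \<ge> max (max 256 (Z0\<^sup>2)) ((real N0 + 1)\<^sup>2)"
  shows "real (count_upto (setpow P1 (Suc j)) X) \<ge>
     C * min 1 (2 powr (-(real j - 1 - real j * \<alpha>))) * d / (4 powr (1 - \<alpha>) * real (Suc j))
       * sqrt X * (ln X) powr (real (Suc j) - 1 - real (Suc j) * \<alpha>)"
proof -
  define \<beta> where "\<beta> = real j - 1 - real j * \<alpha>"
  define mb where "mb = min 1 (2 powr (-\<beta>))"
  have mb: "mb > 0" by (simp add: mb_def)
  define N where "N = nat \<lfloor>sqrt X\<rfloor>"
  define Q where "Q = setpow P1 j"
  define R where "R = setpow P1 (Suc j)"
  have RQ: "R = setmul P1 Q" by (simp add: R_def Q_def)
  have sX16: "sqrt X \<ge> 16" using X by (intro sqrt_ge_of_sq) auto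
  have X1: "X > 1" using X by auto
  have sXZ0: "sqrt X \<ge> Z0" using X by (intro sqrt_ge_of_sq) auto
  have sXN0: "sqrt X \<ge> real N0 + 1" using X by (intro sqrt_ge_of_sq) auto
  have N_le: "real N \<le> sqrt X" unfolding N_def using sX16 by linarith
  have N_ge: "real N \<ge> sqrt X - 1" unfolding N_def using sX16 by linarith
  have NN0: "N \<ge> N0" using N_ge sXN0 by linarith
  have lnX: "ln X > 0" using X1 by simp
  have ln16: "ln X \<ge> 4 * ln 2"
  proof -
    have "ln X \<ge> ln (2^4)" using X by (subst ln_le_cancel_iff) auto
    moreover have "ln ((2::real)^4) = 4 * ln 2" by (simp only: ln_realpow)
    ultimately show ?thesis by linarith
  qed
  have lnN: "ln (real N) \<ge> ln X / 4"
  proof -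
    have "real N \<ge> sqrt X / 2" using N_ge sX16 by linarith
    hence "ln (real N) \<ge> ln (sqrt X / 2)" using sX16 X1 by (subst ln_le_cancel_iff) auto
    also have "ln (sqrt X / 2) = ln X / 2 - ln 2" using X1 sX16 by (simp add: ln_div ln_sqrt)
    finally show ?thesis using ln16 by linarith
  qed
  define T where "T = Sigma (P1 \<inter> {1..N}) (\<lambda>p. {q \<in> Q. 1 \<le> q \<and> real q \<le> X / real p})"
  have finT: "finite T" unfolding T_def by (intro finite_SigmaI) (auto intro: finite_count_set finite_count_set')
  have cardT: "card T = (\<Sum>p\<in>P1 \<inter> {1..N}. count_upto Q (X / real p))"
    unfolding T_def count_upto_def by (subst card_SigmaI) (auto intro: finite_count_set finite_count_set')
  define g where "g = (\<lambda>(p::nat, q::nat). p * q)"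
  have img: "g ` T \<subseteq> {n \<in> R. 1 \<le> n \<and> real n \<le> X}"
  proof
    fix n assume "n \<in> g ` T"
    then obtain p q where pq: "p \<in> P1" "1 \<le> p" "p \<le> N" "q \<in> Q" "1 \<le> q" "real q \<le> X / real p" "n = p * q"
      unfolding T_def g_def by auto
    have "n \<in> R" unfolding RQ setmul_def using pq by auto
    moreover have "1 \<le> n" using pq by simp
    moreover have "real n \<le> X"
    proof -
      have "real p * real q \<le> real p * (X / real p)" using pq by (intro mult_left_mono) auto
      thus ?thesis using pq by simp
    qed
    ultimately show "n \<in> {n \<in> R. 1 \<le> n \<and> real n \<le> X}" by simp
  qed
  have fiber: "card {t \<in> T. g t = n} \<le> Suc j" for n
  proof (cases "{t \<in> T. g t = n} = {}")
    case True then show ?thesis by (simp only: card.empty)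
  next
    case False
    then obtain t where t: "t \<in> T" "g t = n" by auto
    hence nR: "n \<in> R" using img by auto
    have pf: "card (prime_factors n) \<le> Suc j" using setpow_facts[OF primes nR[unfolded R_def]] by simp
    have npos: "n > 0" using setpow_facts[OF primes nR[unfolded R_def]] by simp
    have "{t \<in> T. g t = n} \<subseteq> (\<lambda>p. (p, n div p)) ` prime_factors n"
    proof
      fix t assume "t \<in> {t \<in> T. g t = n}"
      then obtain p q where pq: "t = (p, q)" "p \<in> P1" "p * q = n" unfolding T_def g_def by auto
      have "prime p" using primes pq by auto
      hence "p \<in> prime_factors n" using pq npos by (auto simp: in_prime_factors_iff)
      moreover have "q = n div p" using pq \<open>prime p\<close> by (auto simp: prime_gt_0_nat)
      ultimately show "t \<in> (\<lambda>p. (p, n div p)) ` prime_factors n" using pq by auto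
    qed
    hence "card {t \<in> T. g t = n} \<le> card ((\<lambda>p. (p, n div p)) ` prime_factors n)"
      by (intro card_mono) auto
    also have "\<dots> \<le> card (prime_factors n)" by (rule card_image_le) simp
    finally show ?thesis using pf by simp
  qed
  have "card T \<le> Suc j * card (g ` T)" by (rule card_fiber_bound[OF finT fiber])
  also have "card (g ` T) \<le> count_upto R X"
    unfolding count_upto_def by (rule card_mono[OF finite_count_set img])
  finally have cT: "real (card T) \<le> real (Suc j) * real (count_upto R X)"
    by (metis of_nat_le_iff of_nat_mult mult_le_mono2 order_trans)
  define K where "K = C * mb * sqrt X * (ln X) powr \<beta>"
  have Kpos: "K \<ge> 0" unfolding K_def using assms mb by simp
  have each: "real (count_upto Q (X / real p)) \<ge> K * (1 / sqrt (real p))" if p: "p \<in> P1 \<inter> {1..N}" for p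
  proof -
    have p1: "real p \<ge> 1" and pN: "real p \<le> sqrt X" using p N_le by auto
    have Xp: "X / real p \<ge> sqrt X"
    proof -
      have "X / real p \<ge> X / sqrt X" using p1 pN X1 by (intro divide_left_mono) auto
      moreover have "X / sqrt X = sqrt X" using X1 by (simp add: real_div_sqrt)
      ultimately show ?thesis by simp
    qed
    have XpX: "X / real p \<le> X" using p1 X1 by (simp add: divide_le_eq)
    have Xp_pos: "X / real p > 0" using p1 X1 by simp
    have l1: "ln (X / real p) \<ge> ln X / 2"
    proof -
      have "ln (X / real p) \<ge> ln (sqrt X)" using Xp sX16 X1 by (subst ln_le_cancel_iff) auto
      thus ?thesis using X1 by (simp add: ln_sqrt)
    qed
    have l2: "ln (X / real p) \<le> ln X" using XpX Xp_pos by simp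
    have band: "(ln (X / real p)) powr \<beta> \<ge> mb * (ln X) powr \<beta>"
      unfolding mb_def by (rule powr_band_lower) (use lnX l1 l2 in auto)
    have hq: "real (count_upto Q (X / real p)) \<ge> C * sqrt (X / real p) * (ln (X / real p)) powr \<beta>"
      unfolding Q_def \<beta>_def by (rule hQ) (use Xp sXZ0 in linarith)
    have "K * (1 / sqrt (real p)) = C * (sqrt X / sqrt (real p)) * (mb * (ln X) powr \<beta>)"
      unfolding K_def by (simp add: field_simps)
    also have "\<dots> \<le> C * (sqrt X / sqrt (real p)) * (ln (X / real p)) powr \<beta>"
      by (rule mult_left_mono[OF band]) (use assms X1 in simp)
    also have "\<dots> = C * sqrt (X / real p) * (ln (X / real p)) powr \<beta>"
      by (simp add: real_sqrt_divide)
    finally show ?thesis using hq by linarith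
  qed
  have "K * (\<Sum>p\<in>P1 \<inter> {1..N}. 1 / sqrt (real p)) \<le> real (card T)"
    unfolding cardT of_nat_sum sum_distrib_left by (rule sum_mono) (rule each)
  moreover have "K * (d * (ln (real N)) powr (1 - \<alpha>)) \<le> K * (\<Sum>p\<in>P1 \<inter> {1..N}. 1 / sqrt (real p))"
    by (rule mult_left_mono[OF hS[OF NN0] Kpos])
  moreover have "(ln X / 4) powr (1 - \<alpha>) \<le> (ln (real N)) powr (1 - \<alpha>)"
    by (rule powr_mono2) (use assms lnX lnN in auto)
  moreover have "(ln X / 4) powr (1 - \<alpha>) = (ln X) powr (1 - \<alpha>) / 4 powr (1 - \<alpha>)"
    using lnX by (simp add: powr_divide)
  ultimately have "K * (d * ((ln X) powr (1 - \<alpha>) / 4 powr (1 - \<alpha>))) \<le> real (card T)"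
    using Kpos assms by (smt (verit) mult_left_mono)
  moreover have "K * (d * ((ln X) powr (1 - \<alpha>) / 4 powr (1 - \<alpha>))) =
     real (Suc j) * (C * mb * d / (4 powr (1 - \<alpha>) * real (Suc j)) * sqrt X * (ln X) powr (real (Suc j) - 1 - real (Suc j) * \<alpha>))"
  proof -
    have "(ln X) powr (real (Suc j) - 1 - real (Suc j) * \<alpha>) = (ln X) powr \<beta> * (ln X) powr (1 - \<alpha>)"
      unfolding \<beta>_def powr_add[symmetric] by (simp add: algebra_simps)
    moreover have gen: "\<And>F S a b e f g. F > 0 \<Longrightarrow> S > 0 \<Longrightarrow>
        a * b * e * f * (d * (g / F)) = S * (a * b * d / (F * S) * e * (f * g))"
      by (simp add: field_simps)
    ultimately show ?thesis unfolding K_def by (simp only:) (rule gen, simp, simp)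
  qed
  ultimately have "real (Suc j) * (C * mb * d / (4 powr (1 - \<alpha>) * real (Suc j)) * sqrt X * (ln X) powr (real (Suc j) - 1 - real (Suc j) * \<alpha>))
     \<le> real (Suc j) * real (count_upto R X)" using cT by linarith
  hence "C * mb * d / (4 powr (1 - \<alpha>) * real (Suc j)) * sqrt X * (ln X) powr (real (Suc j) - 1 - real (Suc j) * \<alpha>)
     \<le> real (count_upto R X)" by (subst (asm) mult_le_cancel_left_pos) auto
  thus ?thesis unfolding R_def mb_def \<beta>_def .
qed


lemma main_induct:
  fixes \<alpha> c :: real
  assumes "\<alpha> < 1" "c > 0"
  shows "j \<ge> 1 \<Longrightarrow> \<exists>C>0. \<forall>P1 :: nat set. (\<forall>p\<in>P1. prime p) \<longrightarrow>
     (\<forall>\<^sub>F X in at_top. real (count_upto P1 X) \<ge> c * sqrt X / (ln X) powr \<alpha>) \<longrightarrow>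
     (\<forall>\<^sub>F X in at_top. real (count_upto (setpow P1 j) X) \<ge> C * sqrt X * (ln X) powr (real j - 1 - real j * \<alpha>))"
proof (induction j rule: dec_induct)
  case base
  show ?case
  proof (intro exI[of _ c] conjI allI impI assms(2))
    fix P1 :: "nat set"
    assume "\<forall>\<^sub>F X in at_top. real (count_upto P1 X) \<ge> c * sqrt X / (ln X) powr \<alpha>"
    moreover have "\<forall>\<^sub>F X in at_top. (X::real) > 1" by (rule eventually_gt_at_top)
    ultimately show "\<forall>\<^sub>F X in at_top. real (count_upto (setpow P1 1) X) \<ge> c * sqrt X * (ln X) powr (real 1 - 1 - real 1 * \<alpha>)"
    proof (rule eventually_elim2)
      fix X :: real assume h: "real (count_upto P1 X) \<ge> c * sqrt X / (ln X) powr \<alpha>" and "X > 1"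
      have "c * sqrt X * (ln X) powr (real 1 - 1 - real 1 * \<alpha>) = c * sqrt X / (ln X) powr \<alpha>"
        by (simp add: powr_minus_divide)
      thus "real (count_upto (setpow P1 1) X) \<ge> c * sqrt X * (ln X) powr (real 1 - 1 - real 1 * \<alpha>)"
        using h by (simp add: setmul_one)
    qed
  qed
next
  case (step j)
  then obtain C where C: "C > 0" and hC: "\<forall>P1 :: nat set. (\<forall>p\<in>P1. prime p) \<longrightarrow>
     (\<forall>\<^sub>F X in at_top. real (count_upto P1 X) \<ge> c * sqrt X / (ln X) powr \<alpha>) \<longrightarrow>
     (\<forall>\<^sub>F X in at_top. real (count_upto (setpow P1 j) X) \<ge> C * sqrt X * (ln X) powr (real j - 1 - real j * \<alpha>))"
    by blast
  obtain d where d: "d > 0" and hd: "\<forall>P::nat set. (\<forall>\<^sub>F X in at_top. real (count_upto P X) \<ge> c * sqrt X / (ln X) powr \<alpha>) \<longrightarrow>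
     (\<exists>N0. \<forall>N\<ge>N0. (\<Sum>p\<in>P \<inter> {1..N}. 1 / sqrt (real p)) \<ge> d * (ln (real N)) powr (1 - \<alpha>))"
    using sum_recip_sqrt_lower[OF assms] by blast
  define C' where "C' = C * min 1 (2 powr (-(real j - 1 - real j * \<alpha>))) * d / (4 powr (1 - \<alpha>) * real (Suc j))"
  have C'pos: "C' > 0" unfolding C'_def using C d by simp
  show ?case
  proof (intro exI[of _ C'] conjI allI impI C'pos)
    fix P1 :: "nat set"
    assume pr: "\<forall>p\<in>P1. prime p"
      and hyp: "\<forall>\<^sub>F X in at_top. real (count_upto P1 X) \<ge> c * sqrt X / (ln X) powr \<alpha>"
    have "\<forall>\<^sub>F X in at_top. real (count_upto (setpow P1 j) X) \<ge> C * sqrt X * (ln X) powr (real j - 1 - real j * \<alpha>)"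
      using hC pr hyp by blast
    then obtain Z0 where Z0: "\<And>Z. Z \<ge> Z0 \<Longrightarrow> real (count_upto (setpow P1 j) Z) \<ge> C * sqrt Z * (ln Z) powr (real j - 1 - real j * \<alpha>)"
      by (auto simp: eventually_at_top_linorder)
    obtain N0 where N0: "\<And>N. N \<ge> N0 \<Longrightarrow> (\<Sum>p\<in>P1 \<inter> {1..N}. 1 / sqrt (real p)) \<ge> d * (ln (real N)) powr (1 - \<alpha>)"
      using hd hyp by blast
    show "\<forall>\<^sub>F X in at_top. real (count_upto (setpow P1 (Suc j)) X) \<ge> C' * sqrt X * (ln X) powr (real (Suc j) - 1 - real (Suc j) * \<alpha>)"
      unfolding eventually_at_top_linorder
    proof (intro exI[of _ "max (max 256 (Z0\<^sup>2)) ((real N0 + 1)\<^sup>2)"] allI impI)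
      fix X :: real assume X: "X \<ge> max (max 256 (Z0\<^sup>2)) ((real N0 + 1)\<^sup>2)"
      show "real (count_upto (setpow P1 (Suc j)) X) \<ge> C' * sqrt X * (ln X) powr (real (Suc j) - 1 - real (Suc j) * \<alpha>)"
        unfolding C'_def by (rule step_bound[OF assms(1) C d _ pr Z0 N0 X]) (use step in auto)
    qed
  qed
qed

theorem corollary2p5:
  fixes \<alpha> c :: real and k :: nat
  assumes "\<alpha> < 1" and "c > 0" and "k \<ge> 2"
  shows "\<exists>c1 > 0. \<forall>P1 :: nat set.
           (\<forall>p\<in>P1. prime p) \<longrightarrow>
           (\<forall>\<^sub>F X in at_top. real (count_upto P1 X) \<ge> c * sqrt X / (ln X) powr \<alpha>) \<longrightarrow>
           (\<forall>\<^sub>F X in at_top. real (count_upto (setpow P1 k) X)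
                \<ge> c1 * sqrt X * (ln X) powr (real k - 1 - real k * \<alpha>))"
  using main_induct[OF assms(1,2), of k] assms(3) by simp

end
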